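(* Let $X=X_\sigma$ be the root monoid associated with a cone $\sigma$, a $k$-dimensional regular face $\tau$ with primitive ray generators $p_1,\ldots,p_k$, and a compatible set of Demazure roots $\{e_1^{(r)},e_2^{(r)}\}_{r=1}^k$, and assume the vectors $e_2^{(1)}-e_1^{(1)},\ldots,e_2^{(k)}-e_1^{(k)}$ are linearly independent (i.e. the group of invertible elements is active). Then the center $Z(X)=\{x\in X: x*y=y*x\ \forall y\in X\}$ equals $$Z(X)=\overline{O_\tau}\cap\{x\in X:\chi^{u+e_1^{(r)}}(x)=\chi^{u+e_2^{(r)}}(x)\ \text{for all }(r,u)\in I\},$$ where $I=\{(r,u): r\in\{1,\ldots,k\},\ u\in S_\sigma,\ \langle p_j,u\rangle=\delta_{jr}\ \text{for all } j=1,\ldots,k\}$.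
   Context: $\mathbb{K}$ algebraically closed of characteristic zero; $N$ lattice, $M$ dual, $S_\sigma=\sigma^\vee\cap M$, $X_\sigma=\operatorname{Spec}\bigoplus_{u\in S_\sigma}\mathbb{K}\chi^u$. $O_\tau$ is the torus orbit consisting of points $x$ with $\chi^u(x)\ne0$ iff $u\in\tau^\perp$; its closure $\overline{O_\tau}$ is the set of $x$ with $\chi^u(x)=0$ for all $u\in S_\sigma\setminus\tau^\perp$. Regular face: primitive ray generators extend to a basis of $N$. Demazure root for ray generator $p_i$ of $\sigma$: $e\in M$, $\langle p_i,e\rangle=-1$, $\langle p_j,e\rangle\ge0$ for the other ray generators. Compatibility: $\langle p_s,e_1^{(r)}\rangle=\langle p_s,e_2^{(r)}\rangle=-\delta_{rs}$. The root monoid is $X_\sigma$ with multiplication $\chi^u(x*y)=\sum_{\bar i+\bar j=\langle\bar p,u\rangle}\prod_r\binom{\langle p_r,u\rangle}{i_r}\chi^{u+\sum_ri_re_2^{(r)}}(x)\chi^{u+\sum_rj_re_1^{(r)}}(y)$, with $\langle\bar p,u\rangle=(\langle p_1,u\rangle,\ldots,\langle p_k,u\rangle)$ (dual to the comultiplication $\chi^u\mapsto\chi^u\otimes\chi^u\prod_r(1\otimes\chi^{e_1^{(r)}}+\chi^{e_2^{(r)}}\otimes1)^{\langle p_r,u\rangle}$). *)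

theory Defs
  imports "HOL-Analysis.Analysis" "HOL-Computational_Algebra.Polynomial"
begin

text \<open>Lattice N = M = Z^n (n = CARD('n)), with the standard pairing.\<close>

definition alg_closed :: "'k::field itself \<Rightarrow> bool" where
  "alg_closed _ = (\<forall>q :: 'k poly. degree q > 0 \<longrightarrow> (\<exists>z. poly q z = 0))"

definition pair :: "int^'n \<Rightarrow> int^'n \<Rightarrow> int" where
  "pair v u = (\<Sum>i\<in>UNIV. v$i * u$i)"

definition primitive :: "int^'n \<Rightarrow> bool" where
  "primitive v = (v \<noteq> 0 \<and> (\<forall>(c::int) w. v = c *s w \<longrightarrow> c > 0 \<longrightarrow> c = 1))"

text \<open>R is the set of primitive ray generators of a strongly convex rational
  polyhedral cone sigma = cone(R): finite, primitive, strongly convex, and each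
  element of R spans a ray (one-dimensional face) of cone(R).\<close>
definition ray_generators :: "(int^'n) set \<Rightarrow> bool" where
  "ray_generators R = (finite R \<and> (\<forall>v\<in>R. primitive v)
     \<and> (\<exists>m. \<forall>v\<in>R. pair v m > 0)
     \<and> (\<forall>v\<in>R. \<exists>m. pair v m = 0 \<and> (\<forall>w\<in>R - {v}. pair w m > 0)))"

definition S_mon :: "(int^'n) set \<Rightarrow> (int^'n) set" where
  "S_mon R = {u. \<forall>v\<in>R. pair v u \<ge> 0}"

text \<open>tau = cone(p 0, ..., p (k-1)) is a k-dimensional regular face of sigma:
  the p i are distinct rays of sigma, tau = sigma \<inter> m^perp for some m in sigma^dual,
  and p 0..p (k-1) extend to a Z-basis of N.\<close>
definition regular_face :: "(int^'n) set \<Rightarrow> nat \<Rightarrow> (nat \<Rightarrow> int^'n) \<Rightarrow> bool" where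
  "regular_face R k p = ((\<forall>i<k. p i \<in> R) \<and> inj_on p {..<k}
     \<and> (\<exists>m. (\<forall>i<k. pair (p i) m = 0) \<and> (\<forall>w\<in>R - p ` {..<k}. pair w m > 0))
     \<and> (\<exists>q :: nat \<Rightarrow> int^'n. (\<forall>i<k. q i = p i)
          \<and> (\<forall>v. \<exists>c :: nat \<Rightarrow> int. v = (\<Sum>i<CARD('n). c i *s q i))
          \<and> (\<forall>c :: nat \<Rightarrow> int. (\<Sum>i<CARD('n). c i *s q i) = 0 \<longrightarrow> (\<forall>i<CARD('n). c i = 0))))"

definition demazure_root :: "(int^'n) set \<Rightarrow> int^'n \<Rightarrow> int^'n \<Rightarrow> bool" where
  "demazure_root R v e = (pair v e = -1 \<and> (\<forall>w\<in>R - {v}. pair w e \<ge> 0))"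

definition compatible_roots ::
  "(int^'n) set \<Rightarrow> nat \<Rightarrow> (nat \<Rightarrow> int^'n) \<Rightarrow> (nat \<Rightarrow> int^'n) \<Rightarrow> (nat \<Rightarrow> int^'n) \<Rightarrow> bool" where
  "compatible_roots R k p e1 e2 = (\<forall>r<k. demazure_root R (p r) (e1 r) \<and> demazure_root R (p r) (e2 r)
     \<and> (\<forall>s<k. pair (p s) (e1 r) = (if r = s then -1 else 0) \<and> pair (p s) (e2 r) = (if r = s then -1 else 0)))"

text \<open>Closed points of X_sigma = Spec K[S_sigma]: monoid homomorphisms
  (S_sigma,+) \<rightarrow> (K,*), x u = chi^u(x); normalised to 0 outside S_sigma.\<close>
definition points :: "(int^'n) set \<Rightarrow> ((int^'n) \<Rightarrow> 'k::field) set" where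
  "points R = {x. (\<forall>u. u \<notin> S_mon R \<longrightarrow> x u = 0) \<and> x 0 = 1
     \<and> (\<forall>u\<in>S_mon R. \<forall>v\<in>S_mon R. x (u + v) = x u * x v)}"

definition rmult :: "(int^'n) set \<Rightarrow> nat \<Rightarrow> (nat \<Rightarrow> int^'n) \<Rightarrow> (nat \<Rightarrow> int^'n) \<Rightarrow> (nat \<Rightarrow> int^'n)
    \<Rightarrow> ((int^'n) \<Rightarrow> 'k::field) \<Rightarrow> ((int^'n) \<Rightarrow> 'k) \<Rightarrow> ((int^'n) \<Rightarrow> 'k)" where
  "rmult R k p e1 e2 x y = (\<lambda>u. if u \<in> S_mon R then
     (\<Sum>i\<in>PiE {..<k} (\<lambda>r. {..nat (pair (p r) u)}).
        (\<Prod>r<k. of_nat (nat (pair (p r) u) choose i r))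
        * x (u + (\<Sum>r<k. int (i r) *s e2 r))
        * y (u + (\<Sum>r<k. int (nat (pair (p r) u) - i r) *s e1 r)))
     else 0)"

definition center :: "(int^'n) set \<Rightarrow> nat \<Rightarrow> (nat \<Rightarrow> int^'n) \<Rightarrow> (nat \<Rightarrow> int^'n) \<Rightarrow> (nat \<Rightarrow> int^'n)
    \<Rightarrow> ((int^'n) \<Rightarrow> 'k::field) set" where
  "center R k p e1 e2 = {x \<in> points R. \<forall>y \<in> points R. rmult R k p e1 e2 x y = rmult R k p e1 e2 y x}"

text \<open>Closure of the orbit O_tau: chi^u vanishes for u in S_sigma \ tau^perp.\<close>
definition orbit_closure :: "(int^'n) set \<Rightarrow> nat \<Rightarrow> (nat \<Rightarrow> int^'n) \<Rightarrow> ((int^'n) \<Rightarrow> 'k::field) set" where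
  "orbit_closure R k p = {x \<in> points R. \<forall>u \<in> S_mon R. (\<exists>j<k. pair (p j) u \<noteq> 0) \<longrightarrow> x u = 0}"

definition index_set :: "(int^'n) set \<Rightarrow> nat \<Rightarrow> (nat \<Rightarrow> int^'n) \<Rightarrow> (nat \<times> (int^'n)) set" where
  "index_set R k p = {(r, u). r < k \<and> u \<in> S_mon R \<and> (\<forall>j<k. pair (p j) u = (if j = r then 1 else 0))}"

end

theory Submission
  imports Defs
begin

lemma pair_add: "pair v (a + b) = pair v a + pair v b"
  by (simp add: pair_def algebra_simps sum.distrib)

lemma pair_smult: "pair v (c *s a) = c * pair v a"
  by (simp add: pair_def sum_distrib_left algebra_simps)

lemma pair_zero: "pair v 0 = 0"
  by (simp add: pair_def)

lemma pair_sum: "pair v (sum f A) = (\<Sum>s\<in>A. pair v (f s))"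
  unfolding pair_def by (simp add: sum_distrib_left sum.swap[of _ UNIV])

lemma pair_e1:
  assumes C: "compatible_roots R k p e1 e2" and j: "j < k"
  shows "pair (p j) (\<Sum>s<k. c s *s e1 s) = - c j"
proof -
  have "pair (p j) (\<Sum>s<k. c s *s e1 s) = (\<Sum>s<k. c s * pair (p j) (e1 s))"
    by (simp add: pair_sum pair_smult)
  also have "\<dots> = (\<Sum>s<k. if s = j then - c s else 0)"
    by (rule sum.cong) (use C j in \<open>auto simp: compatible_roots_def\<close>)
  also have "\<dots> = - c j" using j by simp
  finally show ?thesis .
qed

lemma pair_e2:
  assumes C: "compatible_roots R k p e1 e2" and j: "j < k"
  shows "pair (p j) (\<Sum>s<k. c s *s e2 s) = - c j"
proof -
  have "pair (p j) (\<Sum>s<k. c s *s e2 s) = (\<Sum>s<k. c s * pair (p j) (e2 s))"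
    by (simp add: pair_sum pair_smult)
  also have "\<dots> = (\<Sum>s<k. if s = j then - c s else 0)"
    by (rule sum.cong) (use C j in \<open>auto simp: compatible_roots_def\<close>)
  also have "\<dots> = - c j" using j by simp
  finally show ?thesis .
qed

lemma W_pair:
  assumes C: "compatible_roots R k p e1 e2" and j: "j < k"
  shows "pair (p j) (u + (\<Sum>s<k. c s *s e1 s) + (\<Sum>s<k. d s *s e2 s)) = pair (p j) u - c j - d j"
  using pair_e1[OF C j] pair_e2[OF C j] by (simp add: pair_add)

lemma W_other:
  assumes C: "compatible_roots R k p e1 e2" and w: "w \<in> R" "w \<notin> p ` {..<k}"
    and cd: "\<forall>r<k. c r \<ge> 0 \<and> d r \<ge> 0"
  shows "pair w (u + (\<Sum>s<k. c s *s e1 s) + (\<Sum>s<k. d s *s e2 s)) \<ge> pair w u"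
proof -
  have "(\<Sum>s<k. c s * pair w (e1 s)) \<ge> 0"
  proof (rule sum_nonneg)
    fix s assume s: "s \<in> {..<k}"
    then have "w \<noteq> p s" using w by auto
    then have "pair w (e1 s) \<ge> 0" using C s w(1) by (auto simp: compatible_roots_def demazure_root_def)
    then show "c s * pair w (e1 s) \<ge> 0" using cd s by simp
  qed
  moreover have "(\<Sum>s<k. d s * pair w (e2 s)) \<ge> 0"
  proof (rule sum_nonneg)
    fix s assume s: "s \<in> {..<k}"
    then have "w \<noteq> p s" using w by auto
    then have "pair w (e2 s) \<ge> 0" using C s w(1) by (auto simp: compatible_roots_def demazure_root_def)
    then show "d s * pair w (e2 s) \<ge> 0" using cd s by simp
  qed
  ultimately show ?thesis by (simp add: pair_add pair_sum pair_smult)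
qed

lemma W_mem:
  assumes C: "compatible_roots R k p e1 e2" and P: "\<forall>r<k. p r \<in> R"
    and u: "u \<in> S_mon R"
    and cd: "\<forall>r<k. c r \<ge> 0 \<and> d r \<ge> 0 \<and> c r + d r \<le> pair (p r) u"
  shows "u + (\<Sum>s<k. c s *s e1 s) + (\<Sum>s<k. d s *s e2 s) \<in> S_mon R"
  unfolding S_mon_def
proof (intro CollectI ballI)
  fix w assume w: "w \<in> R"
  show "0 \<le> pair w (u + (\<Sum>s<k. c s *s e1 s) + (\<Sum>s<k. d s *s e2 s))"
  proof (cases "w \<in> p ` {..<k}")
    case True
    then obtain j where j: "j < k" "w = p j" by auto
    show ?thesis using W_pair[OF C j(1)] cd j by auto
  next
    case False
    have "pair w u \<ge> 0" using u w by (auto simp: S_mon_def)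
    moreover have "pair w u \<le> pair w (u + (\<Sum>s<k. c s *s e1 s) + (\<Sum>s<k. d s *s e2 s))"
      by (rule W_other[OF C w False]) (use cd in auto)
    ultimately show ?thesis by linarith
  qed
qed



definition vanish :: "nat \<Rightarrow> (nat \<Rightarrow> int^'n) \<Rightarrow> ((int^'n) \<Rightarrow> 'k::field) \<Rightarrow> bool" where
  "vanish k p x = (\<forall>v. (\<exists>j<k. pair (p j) v \<noteq> 0) \<longrightarrow> x v = 0)"

lemma S_pair_nonneg: "u \<in> S_mon R \<Longrightarrow> w \<in> R \<Longrightarrow> pair w u \<ge> 0"
  by (auto simp: S_mon_def)

lemma collapse1:
  assumes C: "compatible_roots R k p e1 e2" and P: "\<forall>r<k. p r \<in> R"
    and u: "u \<in> S_mon R" and V: "vanish k p x"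
  shows "rmult R k p e1 e2 x y u = x (u + (\<Sum>r<k. int (nat (pair (p r) u)) *s e2 r)) * y u"
proof -
  define a where "a = (\<lambda>r. nat (pair (p r) u))"
  define A where "A = PiE {..<k} (\<lambda>r. {..a r})"
  define f where "f = (\<lambda>i. (\<Prod>r<k. of_nat (a r choose i r)) * x (u + (\<Sum>r<k. int (i r) *s e2 r))
       * y (u + (\<Sum>r<k. int (a r - i r) *s e1 r)))"
  have eq: "rmult R k p e1 e2 x y u = sum f A" using u by (simp add: rmult_def a_def A_def f_def)
  define i0 where "i0 = restrict a {..<k}"
  have i0A: "i0 \<in> A" by (auto simp: A_def i0_def)
  have fin: "finite A" by (simp add: A_def finite_PiE)
  have split: "sum f A = f i0 + sum f (A - {i0})" using sum.remove[OF fin i0A] .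
  have rest: "sum f (A - {i0}) = 0"
  proof (rule sum.neutral, rule ballI)
    fix i assume i: "i \<in> A - {i0}"
    have "\<exists>r<k. i r \<noteq> a r"
    proof (rule ccontr)
      assume "\<not> ?thesis"
      hence "i = i0" using i PiE_arb[of i "{..<k}" "\<lambda>r. {..a r}"]
        by (auto simp: A_def i0_def fun_eq_iff)
      thus False using i by auto
    qed
    then obtain r where r: "r < k" "i r \<noteq> a r" by auto
    have ir: "i r \<le> a r" using i r by (auto simp: A_def PiE_def Pi_def)
    have "pair (p r) (u + (\<Sum>s<k. int (i s) *s e2 s)) = pair (p r) u - int (i r)"
      using pair_e2[OF C r(1), of "\<lambda>s. int (i s)"] by (simp add: pair_add)
    moreover have "pair (p r) u = int (a r)"
      using S_pair_nonneg[OF u] P r by (simp add: a_def)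
    ultimately have "pair (p r) (u + (\<Sum>s<k. int (i s) *s e2 s)) \<noteq> 0" using ir r by simp
    hence "x (u + (\<Sum>s<k. int (i s) *s e2 s)) = 0" using V r(1) by (auto simp: vanish_def)
    thus "f i = 0" by (simp add: f_def)
  qed
  have "f i0 = x (u + (\<Sum>r<k. int (a r) *s e2 r)) * y u"
    by (simp add: f_def i0_def)
  then show ?thesis using eq split rest by (simp add: a_def)
qed

lemma collapse2:
  assumes C: "compatible_roots R k p e1 e2" and P: "\<forall>r<k. p r \<in> R"
    and u: "u \<in> S_mon R" and V: "vanish k p x"
  shows "rmult R k p e1 e2 y x u = y u * x (u + (\<Sum>r<k. int (nat (pair (p r) u)) *s e1 r))"
proof -
  define a where "a = (\<lambda>r. nat (pair (p r) u))"
  define A where "A = PiE {..<k} (\<lambda>r. {..a r})"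
  define f where "f = (\<lambda>i. (\<Prod>r<k. of_nat (a r choose i r)) * y (u + (\<Sum>r<k. int (i r) *s e2 r))
       * x (u + (\<Sum>r<k. int (a r - i r) *s e1 r)))"
  have eq: "rmult R k p e1 e2 y x u = sum f A" using u by (simp add: rmult_def a_def A_def f_def)
  define i0 where "i0 = restrict (\<lambda>_. 0::nat) {..<k}"
  have i0A: "i0 \<in> A" by (auto simp: A_def i0_def)
  have fin: "finite A" by (simp add: A_def finite_PiE)
  have split: "sum f A = f i0 + sum f (A - {i0})" using sum.remove[OF fin i0A] .
  have rest: "sum f (A - {i0}) = 0"
  proof (rule sum.neutral, rule ballI)
    fix i assume i: "i \<in> A - {i0}"
    have "\<exists>r<k. i r \<noteq> 0"
    proof (rule ccontr)
      assume "\<not> ?thesis"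
      hence "i = i0" using i PiE_arb[of i "{..<k}" "\<lambda>r. {..a r}"]
        by (auto simp: A_def i0_def fun_eq_iff)
      thus False using i by auto
    qed
    then obtain r where r: "r < k" "i r \<noteq> 0" by auto
    have ir: "i r \<le> a r" using i r by (auto simp: A_def PiE_def Pi_def)
    have "pair (p r) (u + (\<Sum>s<k. int (a s - i s) *s e1 s)) = pair (p r) u - int (a r - i r)"
      using pair_e1[OF C r(1), of "\<lambda>s. int (a s - i s)"] by (simp add: pair_add)
    moreover have "pair (p r) u = int (a r)"
      using S_pair_nonneg[OF u] P r by (simp add: a_def)
    ultimately have "pair (p r) (u + (\<Sum>s<k. int (a s - i s) *s e1 s)) \<noteq> 0" using ir r by simp
    hence "x (u + (\<Sum>s<k. int (a s - i s) *s e1 s)) = 0" using V r(1) by (auto simp: vanish_def)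
    thus "f i = 0" by (simp add: f_def)
  qed
  have "f i0 = y u * x (u + (\<Sum>r<k. int (a r) *s e1 r))"
    by (simp add: f_def i0_def)
  then show ?thesis using eq split rest by (simp add: a_def)
qed


lemma chain:
  assumes C: "compatible_roots R k p e1 e2" and P: "\<forall>r<k. p r \<in> R"
    and u: "u \<in> S_mon R"
    and cond: "\<forall>(r, u') \<in> index_set R k p. x (u' + e1 r) = x (u' + e2 r)"
  shows "\<forall>c d. (\<forall>r<k. c r \<ge> 0 \<and> d r \<ge> 0 \<and> c r + d r = pair (p r) u) \<longrightarrow> (\<Sum>r<k. nat (c r)) = n \<longrightarrow>
     x (u + (\<Sum>s<k. c s *s e1 s) + (\<Sum>s<k. d s *s e2 s)) = x (u + (\<Sum>s<k. pair (p s) u *s e2 s))"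
proof (induction n)
  case 0
  show ?case
  proof (intro allI impI)
    fix c d :: "nat \<Rightarrow> int"
    assume cd: "\<forall>r<k. c r \<ge> 0 \<and> d r \<ge> 0 \<and> c r + d r = pair (p r) u"
      and s: "(\<Sum>r<k. nat (c r)) = 0"
    have c0: "\<forall>r<k. c r = 0" using s cd by (auto simp: order_antisym)
    have "(\<Sum>s<k. c s *s e1 s) = 0" using c0 by simp
    moreover have "(\<Sum>s<k. d s *s e2 s) = (\<Sum>s<k. pair (p s) u *s e2 s)"
      by (rule sum.cong) (use cd c0 in auto)
    ultimately show "x (u + (\<Sum>s<k. c s *s e1 s) + (\<Sum>s<k. d s *s e2 s)) = x (u + (\<Sum>s<k. pair (p s) u *s e2 s))"
      by simp
  qed
next
  case (Suc n)
  show ?case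
  proof (intro allI impI)
    fix c d :: "nat \<Rightarrow> int"
    assume cd: "\<forall>r<k. c r \<ge> 0 \<and> d r \<ge> 0 \<and> c r + d r = pair (p r) u"
      and s: "(\<Sum>r<k. nat (c r)) = Suc n"
    obtain r where r: "r < k" "c r > 0"
    proof -
      have "\<exists>r\<in>{..<k}. nat (c r) \<noteq> 0"
      proof (rule ccontr)
        assume "\<not> ?thesis"
        then have "(\<Sum>r<k. nat (c r)) = 0" by auto
        then show False using s by simp
      qed
      then show ?thesis using that by auto
    qed
    define c' where "c' = c(r := c r - 1)"
    define d' where "d' = d(r := d r + 1)"
    have cd': "\<forall>q<k. c' q \<ge> 0 \<and> d' q \<ge> 0 \<and> c' q + d' q = pair (p q) u"
      using cd r by (auto simp: c'_def d'_def)
    have s1: "(\<Sum>q<k. nat (c q)) = nat (c r) + (\<Sum>q\<in>{..<k}-{r}. nat (c q))"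
      by (rule sum.remove) (use r in auto)
    have s2: "(\<Sum>q<k. nat (c' q)) = nat (c' r) + (\<Sum>q\<in>{..<k}-{r}. nat (c' q))"
      by (rule sum.remove) (use r in auto)
    have s3: "(\<Sum>q\<in>{..<k}-{r}. nat (c' q)) = (\<Sum>q\<in>{..<k}-{r}. nat (c q))"
      by (rule sum.cong) (auto simp: c'_def)
    have s': "(\<Sum>q<k. nat (c' q)) = n"
      using s s1 s2 s3 r by (simp add: c'_def)
    define u' where "u' = u + (\<Sum>s<k. c' s *s e1 s) + (\<Sum>s<k. d s *s e2 s)"
    have u'S: "u' \<in> S_mon R" unfolding u'_def
      by (rule W_mem[OF C P u]) (use cd r in \<open>auto simp: c'_def\<close>)
    have u'pair: "\<forall>j<k. pair (p j) u' = (if j = r then 1 else 0)"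
      using W_pair[OF C] cd r unfolding u'_def by (auto simp: c'_def)
    have I: "(r, u') \<in> index_set R k p"
      using u'S u'pair r by (simp add: index_set_def)
    have e1eq: "(\<Sum>s<k. c s *s e1 s) = (\<Sum>s<k. c' s *s e1 s + (if s = r then e1 s else 0))"
      by (rule sum.cong) (auto simp: vec_eq_iff algebra_simps c'_def)
    have e1eq': "(\<Sum>s<k. c s *s e1 s) = (\<Sum>s<k. c' s *s e1 s) + e1 r"
      using e1eq r by (simp add: sum.distrib)
    have e2eq: "(\<Sum>s<k. d' s *s e2 s) = (\<Sum>s<k. d s *s e2 s + (if s = r then e2 s else 0))"
      by (rule sum.cong) (auto simp: vec_eq_iff algebra_simps d'_def)
    have e2eq': "(\<Sum>s<k. d' s *s e2 s) = (\<Sum>s<k. d s *s e2 s) + e2 r"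
      using e2eq r by (simp add: sum.distrib)
    have "x (u' + e1 r) = x (u' + e2 r)" using cond I by auto
    moreover have "u' + e1 r = u + (\<Sum>s<k. c s *s e1 s) + (\<Sum>s<k. d s *s e2 s)"
      unfolding u'_def e1eq' by (simp add: algebra_simps)
    moreover have "u' + e2 r = u + (\<Sum>s<k. c' s *s e1 s) + (\<Sum>s<k. d' s *s e2 s)"
      unfolding u'_def e2eq' by (simp add: algebra_simps)
    ultimately show "x (u + (\<Sum>s<k. c s *s e1 s) + (\<Sum>s<k. d s *s e2 s)) = x (u + (\<Sum>s<k. pair (p s) u *s e2 s))"
      using Suc.IH cd' s' by auto
  qed
qed


lemma zero_S: "0 \<in> S_mon R"
  by (simp add: S_mon_def pair_zero)

lemma add_S: "u \<in> S_mon R \<Longrightarrow> v \<in> S_mon R \<Longrightarrow> u + v \<in> S_mon R"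
  by (auto simp: S_mon_def pair_add)

lemma points_one: "(\<lambda>w. if w \<in> S_mon R then 1 else 0) \<in> points R"
  by (auto simp: points_def zero_S add_S)

definition ytest :: "(int^'n) set \<Rightarrow> nat \<Rightarrow> (nat \<Rightarrow> int^'n) \<Rightarrow> 'n \<Rightarrow> ((int^'n) \<Rightarrow> 'k::field_char_0)" where
  "ytest R k p i = (\<lambda>w. if w \<in> S_mon R \<and> (\<forall>j<k. pair (p j) w = 0) then of_rat ((2::rat) powi (w $ i)) else 0)"

lemma ytest_vanish: "vanish k p (ytest R k p i)"
  by (auto simp: vanish_def ytest_def)

lemma ytest_points:
  assumes P: "\<forall>r<k. p r \<in> R"
  shows "ytest R k p i \<in> points R"
  unfolding points_def
proof (intro CollectI conjI allI impI ballI)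
  fix u :: "int^'a" assume "u \<notin> S_mon R" then show "ytest R k p i u = 0" by (simp add: ytest_def)
next
  show "ytest R k p i 0 = 1" by (simp add: ytest_def zero_S pair_zero)
next
  fix u v :: "int^'a" assume u: "u \<in> S_mon R" and v: "v \<in> S_mon R"
  have uv: "u + v \<in> S_mon R" using u v by (rule add_S)
  show "ytest R k p i (u + v) = ytest R k p i u * ytest R k p i v"
  proof (cases "(\<forall>j<k. pair (p j) u = 0) \<and> (\<forall>j<k. pair (p j) v = 0)")
    case True
    then have "\<forall>j<k. pair (p j) (u + v) = 0" by (simp add: pair_add)
    then show ?thesis using True u v uv
      by (simp add: ytest_def power_int_add of_rat_mult)
  next
    case False
    then obtain j where j: "j < k" "pair (p j) u \<noteq> 0 \<or> pair (p j) v \<noteq> 0" by auto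
    have "pair (p j) u \<ge> 0" "pair (p j) v \<ge> 0" using u v P j(1) S_pair_nonneg by auto
    then have "pair (p j) (u + v) \<noteq> 0" using j(2) unfolding pair_add by arith
    then show ?thesis using j by (auto simp: ytest_def)
  qed
qed

lemma powi2_inj: "(2::rat) powi a = 2 powi b \<Longrightarrow> a = b"
proof (rule ccontr)
  assume h: "(2::rat) powi a = 2 powi b" "a \<noteq> b"
  show False
  proof (cases "a < b")
    case True then show False using power_int_strict_increasing[of a b "2::rat"] h by simp
  next
    case False then have "b < a" using h by simp
    then show False using power_int_strict_increasing[of b a "2::rat"] h by simp
  qed
qed

theorem mainTheorem12:
  fixes R :: "(int^'n::finite) set" and k :: nat and p e1 e2 :: "nat \<Rightarrow> int^'n"
  assumes "alg_closed TYPE('k::field_char_0)"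
    and "ray_generators R"
    and "regular_face R k p"
    and "compatible_roots R k p e1 e2"
    and "\<forall>c :: nat \<Rightarrow> int. (\<Sum>r<k. c r *s (e2 r - e1 r)) = 0 \<longrightarrow> (\<forall>r<k. c r = 0)"
  shows "(center R k p e1 e2 :: ((int^'n) \<Rightarrow> 'k) set)
    = orbit_closure R k p \<inter>
      {x \<in> points R. \<forall>(r, u) \<in> index_set R k p. x (u + e1 r) = x (u + e2 r)}"
proof -
  have C: "compatible_roots R k p e1 e2" by (rule assms(4))
  have P: "\<forall>r<k. p r \<in> R" using assms(3) by (simp add: regular_face_def)
  show ?thesis
  proof (rule set_eqI, rule iffI)
    fix x :: "(int^'n) \<Rightarrow> 'k"
    assume xc: "x \<in> center R k p e1 e2"
    then have xp: "x \<in> points R"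
      and comm: "\<forall>y\<in>points R. rmult R k p e1 e2 x y = rmult R k p e1 e2 y x"
      by (auto simp: center_def)
    have V: "vanish k p x"
      unfolding vanish_def
    proof (intro allI impI)
      fix u assume "\<exists>j<k. pair (p j) u \<noteq> 0"
      then obtain j where j: "j < k" "pair (p j) u \<noteq> 0" by auto
      show "x u = 0"
      proof (cases "u \<in> S_mon R")
        case False thus ?thesis using xp by (auto simp: points_def)
      next
        case True
        define a where "a = (\<lambda>r. int (nat (pair (p r) u)))"
        have a_eq: "\<forall>r<k. a r = pair (p r) u" using True P S_pair_nonneg by (auto simp: a_def)
        define D where "D = (\<Sum>r<k. a r *s (e2 r - e1 r))"
        have "D \<noteq> 0"
        proof
          assume "D = 0"
          then have "\<forall>r<k. a r = 0" using assms(5) unfolding D_def by blast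
          thus False using a_eq j by auto
        qed
        then obtain i where i: "D $ i \<noteq> 0" by (auto simp: vec_eq_iff)
        define y where "y = (ytest R k p i :: (int^'n) \<Rightarrow> 'k)"
        have yp: "y \<in> points R" using ytest_points[OF P] by (simp add: y_def)
        have yv: "vanish k p y" by (simp add: y_def ytest_vanish)
        have nn: "\<forall>r<k. pair (p r) u \<ge> 0" using True P S_pair_nonneg by auto
        define v1 where "v1 = u + (\<Sum>r<k. a r *s e1 r)"
        define v2 where "v2 = u + (\<Sum>r<k. a r *s e2 r)"
        have c2: "rmult R k p e1 e2 x y u = x u * y v1"
          unfolding v1_def a_def by (rule collapse2[OF C P True yv])
        have c1: "rmult R k p e1 e2 y x u = y v2 * x u"
          unfolding v2_def a_def by (rule collapse1[OF C P True yv])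
        have eq: "x u * y v1 = y v2 * x u"
          using comm yp c1 c2 by metis
        have "u + (\<Sum>s<k. a s *s e1 s) + (\<Sum>s<k. (\<lambda>_. 0::int) s *s e2 s) \<in> S_mon R"
          by (rule W_mem[OF C P True]) (use nn in \<open>auto simp: a_def\<close>)
        then have v1S: "v1 \<in> S_mon R" by (simp add: v1_def)
        have "u + (\<Sum>s<k. (\<lambda>_. 0::int) s *s e1 s) + (\<Sum>s<k. a s *s e2 s) \<in> S_mon R"
          by (rule W_mem[OF C P True]) (use nn in \<open>auto simp: a_def\<close>)
        then have v2S: "v2 \<in> S_mon R" by (simp add: v2_def)
        have v1p: "\<forall>j<k. pair (p j) v1 = 0"
          using W_pair[OF C, of _ u a "\<lambda>_. 0"] a_eq by (simp add: v1_def)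
        have v2p: "\<forall>j<k. pair (p j) v2 = 0"
          using W_pair[OF C, of _ u "\<lambda>_. 0" a] a_eq by (simp add: v2_def)
        have "v2 $ i - v1 $ i = D $ i"
          by (simp add: v1_def v2_def D_def sum_subtractf[symmetric] algebra_simps)
        then have "v1 $ i \<noteq> v2 $ i" using i by auto
        then have "(2::rat) powi (v1 $ i) \<noteq> 2 powi (v2 $ i)" using powi2_inj by blast
        then have "y v1 \<noteq> y v2"
          using v1S v2S v1p v2p by (simp add: y_def ytest_def)
        then show "x u = 0" using eq
          by (metis mult.commute mult_left_cancel)
      qed
    qed
    have orb: "x \<in> orbit_closure R k p"
      using xp V by (auto simp: orbit_closure_def vanish_def)
    have cond: "\<forall>(r, u) \<in> index_set R k p. x (u + e1 r) = x (u + e2 r)"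
    proof (intro ballI, clarify)
      fix r u assume ru: "(r, u) \<in> index_set R k p"
      then have r: "r < k" and u: "u \<in> S_mon R"
        and up: "\<forall>j<k. pair (p j) u = (if j = r then 1 else 0)"
        by (auto simp: index_set_def)
      define y where "y = (\<lambda>w. if w \<in> S_mon R then 1 else 0 :: 'k)"
      have yp: "y \<in> points R" unfolding y_def by (rule points_one)
      have s1: "(\<Sum>s<k. int (nat (pair (p s) u)) *s e1 s) = (\<Sum>s<k. if s = r then e1 s else 0)"
        by (rule sum.cong) (use up in auto)
      have s2: "(\<Sum>s<k. int (nat (pair (p s) u)) *s e2 s) = (\<Sum>s<k. if s = r then e2 s else 0)"
        by (rule sum.cong) (use up in auto)
      have "rmult R k p e1 e2 x y u = rmult R k p e1 e2 y x u" using comm yp by auto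
      then show "x (u + e1 r) = x (u + e2 r)"
        using collapse1[OF C P u V, of y] collapse2[OF C P u V, of y] s1 s2 r u
        by (simp add: y_def)
    qed
    show "x \<in> orbit_closure R k p \<inter>
      {x \<in> points R. \<forall>(r, u) \<in> index_set R k p. x (u + e1 r) = x (u + e2 r)}"
      using orb xp cond by blast
  next
    fix x :: "(int^'n) \<Rightarrow> 'k"
    assume xr: "x \<in> orbit_closure R k p \<inter>
      {x \<in> points R. \<forall>(r, u) \<in> index_set R k p. x (u + e1 r) = x (u + e2 r)}"
    then have xp: "x \<in> points R"
      and cond: "\<forall>(r, u) \<in> index_set R k p. x (u + e1 r) = x (u + e2 r)"
      and orb: "x \<in> orbit_closure R k p" by auto
    have V: "vanish k p x"
      unfolding vanish_def
    proof (intro allI impI)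
      fix v assume h: "\<exists>j<k. pair (p j) v \<noteq> 0"
      show "x v = 0"
        using h orb xp by (cases "v \<in> S_mon R") (auto simp: orbit_closure_def points_def)
    qed
    have "\<forall>y\<in>points R. rmult R k p e1 e2 x y = rmult R k p e1 e2 y x"
    proof
      fix y :: "(int^'n) \<Rightarrow> 'k" assume yp: "y \<in> points R"
      show "rmult R k p e1 e2 x y = rmult R k p e1 e2 y x"
      proof
        fix u
        show "rmult R k p e1 e2 x y u = rmult R k p e1 e2 y x u"
        proof (cases "u \<in> S_mon R")
          case False then show ?thesis by (simp add: rmult_def)
        next
          case True
          define a where "a = (\<lambda>r. int (nat (pair (p r) u)))"
          have a_eq: "\<forall>r<k. a r = pair (p r) u" using True P S_pair_nonneg by (auto simp: a_def)
          have ch: "x (u + (\<Sum>s<k. a s *s e1 s) + (\<Sum>s<k. 0 *s e2 s)) = x (u + (\<Sum>s<k. pair (p s) u *s e2 s))"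
          proof -
            have pre: "\<forall>r<k. 0 \<le> a r \<and> 0 \<le> (0::int) \<and> a r + 0 = pair (p r) u"
              using True P S_pair_nonneg by (auto simp: a_def)
            have H: "\<forall>c d. (\<forall>r<k. c r \<ge> 0 \<and> d r \<ge> 0 \<and> c r + d r = pair (p r) u) \<longrightarrow> (\<Sum>r<k. nat (c r)) = (\<Sum>r<k. nat (a r)) \<longrightarrow>
               x (u + (\<Sum>s<k. c s *s e1 s) + (\<Sum>s<k. d s *s e2 s)) = x (u + (\<Sum>s<k. pair (p s) u *s e2 s))"
              by (rule chain[OF C P True cond])
            show ?thesis by (rule H[rule_format, of a "\<lambda>_. 0", OF pre[rule_format] refl])
          qed
          have se: "(\<Sum>s<k. pair (p s) u *s e2 s) = (\<Sum>s<k. a s *s e2 s)"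
            by (rule sum.cong) (use a_eq in auto)
          have "x (u + (\<Sum>s<k. a s *s e1 s)) = x (u + (\<Sum>s<k. a s *s e2 s))"
            using ch se by simp
          then show ?thesis
            using collapse1[OF C P True V, of y] collapse2[OF C P True V, of y]
            by (simp add: a_def mult.commute)
        qed
      qed
    qed
    then show "x \<in> center R k p e1 e2" using xp by (simp add: center_def)
  qed
qed

end
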